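(* Let $K$ be a finite field of characteristic $p$, let $L$ be the quadratic extension of $K$, and let $d$ be an integer with $\gcd(d,|L|-1)=1$ that is degenerate over $K$ but not over $L$. Then $V_{L,d}=[K:\mathbb{F}_p]$, and there exists $a\in L^\times$ with $W_{L,d}(a)=-|K|$.
   Context: $\psi_L(x)=\exp(2\pi i\,\mathrm{Tr}_{L/\mathbb{F}_p}(x)/p)$, $W_{L,d}(a)=\sum_{x\in L}\psi_L(x^d+ax)$, and $V_{L,d}=\min_{a\in L^\times}\nu_p(W_{L,d}(a))$ with $\nu_p$ the $p$-adic valuation. $d$ is degenerate over a field $F$ of characteristic $p$ if $d\equiv p^j\pmod{|F|-1}$ for some integer $j$. *)

theory Defs
  imports Complex_Main "HOL-Computational_Algebra.Polynomial" "HOL-Library.Extended_Real"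
    "HOL-Number_Theory.Cong"
begin

definition is_subfield :: "'a::field set \<Rightarrow> bool" where
  "is_subfield K \<longleftrightarrow> 0 \<in> K \<and> 1 \<in> K \<and>
     (\<forall>x\<in>K. \<forall>y\<in>K. x + y \<in> K \<and> x * y \<in> K) \<and>
     (\<forall>x\<in>K. - x \<in> K \<and> inverse x \<in> K)"

definition fp_degree :: "'a::{field,finite} itself \<Rightarrow> nat" where
  "fp_degree _ = (THE m. card (UNIV :: 'a set) = CHAR('a) ^ m)"

definition abs_trace :: "'a::{field,finite} \<Rightarrow> 'a" where
  "abs_trace x = (\<Sum>i<fp_degree TYPE('a). x ^ (CHAR('a) ^ i))"

definition psi :: "'a::{field,finite} \<Rightarrow> complex" where
  "psi x = exp (2 * complex_of_real pi * \<i> *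
      of_nat (THE k. k < CHAR('a) \<and> of_nat k = abs_trace x) / of_nat CHAR('a))"

text \<open>Weil sum W_{L,d}(a) = sum_{x in L} psi(x^d + a x) (d an integer; 0^d = 0 for d<0).\<close>
definition weil_sum :: "int \<Rightarrow> 'a::{field,finite} \<Rightarrow> complex" where
  "weil_sum d a = (\<Sum>x\<in>UNIV. psi (x powi d + a * x))"

text \<open>p-adic valuation (normalised by nu_p(p) = 1) of an algebraic integer z of the cyclotomic
  field Q(zeta_p) (where there is a unique prime above p):
  nu_p(z) = sup { a/b : b > 0, z^b / p^a is an algebraic integer }, which is +infinity for z = 0.\<close>
definition nu_p :: "nat \<Rightarrow> complex \<Rightarrow> ereal" where
  "nu_p p z = Sup {ereal (real a / real b) | a b. b > 0 \<and>
                     algebraic_int (z ^ b / of_nat p ^ a)}"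

definition V_val :: "'a::{field,finite} itself \<Rightarrow> int \<Rightarrow> ereal" where
  "V_val _ d = Min ((\<lambda>a::'a. nu_p CHAR('a) (weil_sum d a)) ` (UNIV - {0}))"

definition degenerate :: "nat \<Rightarrow> nat \<Rightarrow> int \<Rightarrow> bool" where
  "degenerate p q d \<longleftrightarrow> (\<exists>j::nat. [d = int p ^ j] (mod (int q - 1)))"

end

theory Submission
  imports Defs "HOL-Computational_Algebra.Primes" "HOL-Analysis.Complex_Transcendental"
begin


section \<open>Basics of finite fields\<close>

lemma ff_char_prime: "prime CHAR('a::{field,finite})"
  by (rule prime_CHAR_semidom) (rule finite_imp_CHAR_pos; simp)

lemma ff_card_ge2: "card (UNIV::'a::{field,finite} set) \<ge> 2"
proof -
  have "{0,1} \<subseteq> (UNIV::'a set)" by auto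
  hence "card {0::'a,1} \<le> card (UNIV::'a set)" by (intro card_mono) auto
  thus ?thesis by simp
qed

lemma ff_pow_card: "(x::'a::{field,finite}) ^ card (UNIV :: 'a set) = x"
proof (cases "x = 0")
  case False
  have "x * (\<Prod>y\<in>UNIV-{0}. x * y) = x * x ^ (card (UNIV :: 'a set) - 1) * \<Prod>(UNIV-{0})"
    by (simp add: prod.distrib mult_ac)
  also have "x * x ^ (card (UNIV :: 'a set) - 1) = x ^ Suc (card (UNIV :: 'a set) - 1)"
    by (subst power_Suc) auto
  also have "Suc (card (UNIV :: 'a set) - 1) = card (UNIV :: 'a set)"
    using finite_UNIV_card_ge_0[where ?'a = 'a] by simp
  also have "(\<Prod>y\<in>UNIV-{0}. x * y) = (\<Prod>y\<in>UNIV-{0}. y)"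
    by (rule prod.reindex_bij_witness[of _ "\<lambda>y. y / x" "\<lambda>y. x * y"]) (use False in auto)
  finally show ?thesis
    by simp
qed (use finite_UNIV_card_ge_0[where ?'a = 'a] in auto)

lemma ff_pow_card1: "(x::'a::{field,finite}) \<noteq> 0 \<Longrightarrow> x ^ (card (UNIV :: 'a set) - 1) = 1"
proof -
  assume "x \<noteq> 0"
  have "x * x ^ (card (UNIV :: 'a set) - 1) = x ^ card (UNIV :: 'a set)"
    using ff_card_ge2[where 'a='a] by (metis Suc_diff_1 le_eq_less_or_eq less_le_trans pos2 power_Suc)
  also have "\<dots> = x * 1" by (simp add: ff_pow_card)
  finally show ?thesis using \<open>x \<noteq> 0\<close> by simp
qed

lemma frob_add: "((x::'a::{field,finite}) + y) ^ (CHAR('a) ^ k) = x ^ (CHAR('a) ^ k) + y ^ (CHAR('a) ^ k)"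
  by (rule freshmans_dream'[OF ff_char_prime refl])

lemma frob_sum: "(sum (f::'b \<Rightarrow> 'a::{field,finite}) A) ^ (CHAR('a) ^ k) = (\<Sum>i\<in>A. f i ^ (CHAR('a) ^ k))"
  by (rule freshmans_dream_sum'[OF ff_char_prime refl])

lemma frob_neg: "(- (x::'a::{field,finite})) ^ (CHAR('a) ^ k) = - (x ^ (CHAR('a) ^ k))"
proof -
  have "(x + - x) ^ (CHAR('a) ^ k) = 0"
    using ff_char_prime[where 'a='a] by (simp add: prime_gt_0_nat)
  thus ?thesis by (simp only: frob_add) (simp add: add_eq_0_iff)
qed

lemma frob_inj: "(x::'a::{field,finite}) ^ (CHAR('a) ^ k) = y ^ (CHAR('a) ^ k) \<Longrightarrow> x = y"
proof -
  assume "x ^ (CHAR('a) ^ k) = y ^ (CHAR('a) ^ k)"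
  hence "(x - y) ^ (CHAR('a) ^ k) = 0"
    using frob_add[of x "-y" k] frob_neg[of y k] by simp
  thus "x = y" by simp
qed

lemma poly_roots_card_le:
  fixes P :: "'a::{field,finite} poly"
  assumes "P \<noteq> 0"
  shows "card {x. poly P x = 0} \<le> degree P"
  by (rule card_poly_roots_bound[OF assms])

lemma fp_degree_eq:
  assumes "card (UNIV::'a::{field,finite} set) = CHAR('a) ^ m"
  shows "fp_degree TYPE('a) = m"
  unfolding fp_degree_def
proof (rule the_equality)
  show "card (UNIV::'a set) = CHAR('a) ^ m" by fact
  fix m' assume "card (UNIV::'a set) = CHAR('a) ^ m'"
  with assms have "CHAR('a) ^ m' = CHAR('a) ^ m" by simp
  moreover have "1 < CHAR('a)" using ff_char_prime[where 'a='a] prime_gt_1_nat by blast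
  ultimately show "m' = m" using power_inject_exp by blast
qed

lemma of_nat_pow_char: "(of_nat k :: 'a::{field,finite}) ^ CHAR('a) = of_nat k"
proof (induction k)
  case 0 thus ?case using ff_char_prime[where 'a='a] by (simp add: prime_gt_0_nat)
next
  case (Suc k)
  have "(of_nat (Suc k) :: 'a) ^ CHAR('a) = (of_nat k + 1) ^ CHAR('a)" by (simp add: add.commute)
  also have "\<dots> = of_nat k ^ CHAR('a) + 1 ^ CHAR('a)"
    by (rule freshmans_dream[OF ff_char_prime refl])
  finally show ?case using Suc by (simp add: add.commute)
qed

lemma prime_field_roots:
  "((y::'a::{field,finite}) ^ CHAR('a) = y) \<longleftrightarrow> (\<exists>k<CHAR('a). y = of_nat k)"
proof -
  define p where "p = CHAR('a)"
  have p2: "p \<ge> 2" using ff_char_prime[where 'a='a] prime_ge_2_nat p_def by blast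
  define R where "R = {y::'a. y ^ p = y}"
  define A where "A = (of_nat ` {..<p} :: 'a set)"
  have AR: "A \<subseteq> R" unfolding A_def R_def p_def using of_nat_pow_char by auto
  have injA: "inj_on (of_nat :: nat \<Rightarrow> 'a) {..<p}"
  proof (rule inj_onI)
    fix a b assume "a \<in> {..<p}" "b \<in> {..<p}" "(of_nat a::'a) = of_nat b"
    thus "a = b" unfolding p_def of_nat_eq_iff_cong_CHAR
      by (simp add: cong_def)
  qed
  have cA: "card A = p" unfolding A_def using card_image[OF injA] by simp
  define P where "P = (monom (1::'a) p + [:0,-1:])"
  have degP: "degree P = p"
    unfolding P_def using p2 by (subst degree_add_eq_left) (auto simp: degree_monom_eq)
  hence "P \<noteq> 0" using p2 by auto
  have "R = {x. poly P x = 0}" unfolding R_def P_def by (auto simp: poly_monom)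
  hence "card R \<le> p" using poly_roots_card_le[OF \<open>P \<noteq> 0\<close>] degP by simp
  moreover have "card A \<le> card R" using AR by (intro card_mono) auto
  ultimately have "A = R" using AR cA by (intro card_subset_eq) auto
  thus ?thesis unfolding A_def R_def p_def by (auto simp: set_eq_iff)
qed




section \<open>Trace and the canonical additive character\<close>

lemma tr_eq:
  assumes "card (UNIV::'a::{field,finite} set) = CHAR('a) ^ m"
  shows "abs_trace (x::'a) = (\<Sum>i<m. x ^ (CHAR('a) ^ i))"
  unfolding abs_trace_def fp_degree_eq[OF assms] ..

lemma tr_add:
  assumes "card (UNIV::'a::{field,finite} set) = CHAR('a) ^ m"
  shows "abs_trace ((x::'a) + y) = abs_trace x + abs_trace y"
  unfolding tr_eq[OF assms] by (simp add: frob_add sum.distrib)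

lemma tr_pow:
  assumes "card (UNIV::'a::{field,finite} set) = CHAR('a) ^ m"
  shows "abs_trace (x::'a) ^ CHAR('a) = abs_trace x"
proof -
  define f where "f i = x ^ (CHAR('a) ^ i)" for i
  have "abs_trace x ^ CHAR('a) = (\<Sum>i<m. f i ^ CHAR('a))"
    unfolding tr_eq[OF assms] f_def by (rule freshmans_dream_sum[OF ff_char_prime refl])
  also have "\<dots> = (\<Sum>i<m. f (Suc i))"
    unfolding f_def by (simp add: power_mult[symmetric] mult.commute)
  also have "\<dots> = (\<Sum>i<m. f i)"
  proof -
    have "(\<Sum>i<Suc m. f i) = f 0 + (\<Sum>i<m. f (Suc i))" by (rule sum.lessThan_Suc_shift)
    moreover have "(\<Sum>i<Suc m. f i) = (\<Sum>i<m. f i) + f m" by simp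
    moreover have "f m = f 0" unfolding f_def using ff_pow_card[of x] assms by simp
    ultimately show ?thesis by (simp add: add.commute)
  qed
  finally show ?thesis unfolding tr_eq[OF assms] f_def .
qed

lemma tr_frob:
  assumes "card (UNIV::'a::{field,finite} set) = CHAR('a) ^ m"
  shows "abs_trace ((x::'a) ^ CHAR('a)) = abs_trace x"
proof -
  have "abs_trace (x ^ CHAR('a)) = (\<Sum>i<m. (x ^ (CHAR('a) ^ i)) ^ CHAR('a))"
    unfolding tr_eq[OF assms] by (simp add: power_mult[symmetric] mult.commute)
  also have "\<dots> = abs_trace x ^ CHAR('a)"
    unfolding tr_eq[OF assms] by (rule freshmans_dream_sum[OF ff_char_prime refl, symmetric])
  finally show ?thesis using tr_pow[OF assms] by simp
qed

lemma tr_frob_pow: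
  assumes "card (UNIV::'a::{field,finite} set) = CHAR('a) ^ m"
  shows "abs_trace ((x::'a) ^ (CHAR('a) ^ k)) = abs_trace x"
proof (induction k)
  case (Suc k)
  have "x ^ (CHAR('a) ^ Suc k) = (x ^ (CHAR('a) ^ k)) ^ CHAR('a)"
    by (simp add: power_mult[symmetric] mult.commute)
  thus ?case using Suc tr_frob[OF assms] by simp
qed simp

lemma tk_ex1:
  assumes "card (UNIV::'a::{field,finite} set) = CHAR('a) ^ m"
  shows "\<exists>!k. k < CHAR('a) \<and> of_nat k = abs_trace (x::'a)"
proof -
  obtain k where k: "k < CHAR('a)" "abs_trace x = of_nat k"
    using iffD1[OF prime_field_roots[of "abs_trace x"] tr_pow[OF assms, of x]] by blast
  show ?thesis
  proof (rule ex1I[of _ k])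
    show "k < CHAR('a) \<and> of_nat k = abs_trace x" using k by simp
    fix k' assume "k' < CHAR('a) \<and> of_nat k' = abs_trace x"
    hence "(of_nat k' :: 'a) = of_nat k" "k' < CHAR('a)" using k by auto
    hence "[k' = k] (mod CHAR('a))" "k' < CHAR('a)" by (simp_all add: of_nat_eq_iff_cong_CHAR)
    thus "k' = k" using k(1) by (rule cong_less_modulus_unique_nat)
  qed
qed

definition tk :: "'a::{field,finite} \<Rightarrow> nat" where
  "tk x = (THE k. k < CHAR('a) \<and> of_nat k = abs_trace x)"

lemma tk:
  assumes "card (UNIV::'a::{field,finite} set) = CHAR('a) ^ m"
  shows "tk (x::'a) < CHAR('a) \<and> of_nat (tk x) = abs_trace x"
  unfolding tk_def by (rule theI'[OF tk_ex1[OF assms]])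

definition omega :: "nat \<Rightarrow> complex" where
  "omega p = exp (2 * complex_of_real pi * \<i> / of_nat p)"

lemma psi_omega: "psi (x::'a::{field,finite}) = omega CHAR('a) ^ tk x"
  unfolding psi_def omega_def tk_def
  by (simp add: exp_of_nat_mult[symmetric] mult_ac)

lemma omega_pow_p: "p > 0 \<Longrightarrow> omega p ^ p = 1"
  unfolding omega_def by (simp add: exp_of_nat_mult[symmetric])

lemma omega_pow_mod: "p > 0 \<Longrightarrow> omega p ^ a = omega p ^ (a mod p)"
proof -
  assume "p > 0"
  have "omega p ^ a = omega p ^ (p * (a div p) + a mod p)" by simp
  also have "\<dots> = omega p ^ (p * (a div p)) * omega p ^ (a mod p)"
    by (rule power_add)
  also have "omega p ^ (p * (a div p)) = (omega p ^ p) ^ (a div p)"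
    by (rule power_mult)
  finally show ?thesis using omega_pow_p[OF \<open>p > 0\<close>] by simp
qed

lemma omega_pow_ne1: "0 < k \<Longrightarrow> k < p \<Longrightarrow> omega p ^ k \<noteq> 1"
proof
  assume k: "0 < k" "k < p" and eq: "omega p ^ k = 1"
  have "omega p ^ k = exp (of_nat k * (2 * complex_of_real pi * \<i> / of_nat p))"
    unfolding omega_def by (rule exp_of_nat_mult[symmetric])
  hence "exp (of_nat k * (2 * complex_of_real pi * \<i> / of_nat p)) = 1"
    using eq by simp
  then obtain n :: int where n: "real k * (2 * pi) / real p = 2 * real_of_int n * pi"
    unfolding exp_eq_1 by simp blast
  hence "real k = real p * of_int n" using k by (simp add: field_simps)
  hence "int k = int p * n" by (metis of_int_eq_iff of_int_mult of_int_of_nat_eq)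
  thus False using k
    by (metis dvd_triv_left int_dvd_int_iff nat_dvd_not_less)
qed

context
  fixes m :: nat
  assumes cardm: "card (UNIV::'a::{field,finite} set) = CHAR('a) ^ m"
begin

lemma p_pos: "CHAR('a) > 0" using ff_char_prime[where 'a='a] prime_gt_0_nat by blast

lemma psi_add: "psi ((x::'a) + y) = psi x * psi y"
proof -
  have "of_nat (tk (x+y)) = (of_nat (tk x + tk y) :: 'a)"
    using tk[OF cardm] tr_add[OF cardm] by simp
  hence "tk (x+y) mod CHAR('a) = (tk x + tk y) mod CHAR('a)"
    unfolding of_nat_eq_iff_cong_CHAR cong_def .
  thus ?thesis unfolding psi_omega
    by (metis omega_pow_mod[OF p_pos] power_add)
qed

lemma psi_zero: "psi (0::'a) = 1"
proof -
  have "abs_trace (0::'a) = 0" unfolding tr_eq[OF cardm] using p_pos by (simp add: power_0_left)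
  hence "of_nat (tk (0::'a)) = (of_nat 0 :: 'a)" using tk[OF cardm] by simp
  hence "tk (0::'a) = 0" using tk[OF cardm, of 0]
    by (metis cong_less_modulus_unique_nat of_nat_eq_iff_cong_CHAR p_pos)
  thus ?thesis unfolding psi_omega by simp
qed

lemma psi_neg: "psi (- (x::'a)) * psi x = 1"
  using psi_add[of "-x" x] psi_zero by simp

lemma psi_diff: "psi ((x::'a) - y) * psi y = psi x"
  using psi_add[of "x - y" y] by simp

lemma psi_frob: "psi ((x::'a) ^ (CHAR('a) ^ k)) = psi x"
proof -
  have "of_nat (tk (x ^ (CHAR('a) ^ k))) = (of_nat (tk x) :: 'a)"
    using tk[OF cardm] tr_frob_pow[OF cardm] by simp
  hence "tk (x ^ (CHAR('a) ^ k)) = tk x"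
    using tk[OF cardm, of x] tk[OF cardm, of "x ^ (CHAR('a) ^ k)"]
    by (metis cong_less_modulus_unique_nat of_nat_eq_iff_cong_CHAR)
  thus ?thesis unfolding psi_omega by simp
qed

lemma psi_nontriv:
  assumes "m > 0"
  shows "\<exists>z::'a. psi z \<noteq> 1"
proof -
  define p where "p = CHAR('a)"
  have p2: "p \<ge> 2" using ff_char_prime[where 'a='a] prime_ge_2_nat p_def by blast
  obtain m' where m': "m = Suc m'" using assms by (cases m) auto
  define P where "P = monom (1::'a) (p ^ m') + (\<Sum>i<m'. monom 1 (p ^ i))"
  have "degree (\<Sum>i<m'. monom (1::'a) (p ^ i)) \<le> p ^ m' - 1"
  proof (rule degree_sum_le)
    fix i assume "i \<in> {..<m'}"
    hence "p ^ i < p ^ m'" using p2 by (intro power_strict_increasing) auto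
    thus "degree (monom (1::'a) (p ^ i)) \<le> p ^ m' - 1" by (simp add: degree_monom_eq)
  qed auto
  moreover have "p ^ m' > 0" using p2 by simp
  ultimately have "degree (\<Sum>i<m'. monom (1::'a) (p ^ i)) < p ^ m'" by linarith
  hence degP: "degree P = p ^ m'"
    unfolding P_def by (subst degree_add_eq_left) (auto simp: degree_monom_eq)
  have "P \<noteq> 0"
  proof
    assume "P = 0" hence "degree P = 0" by simp
    with degP p2 show False by simp
  qed
  have polyP: "poly P x = abs_trace x" for x
    unfolding P_def tr_eq[OF cardm] m' p_def by (simp add: poly_sum poly_monom add.commute)
  have "p ^ m' < p ^ m" using p2 m' by (intro power_strict_increasing) auto
  hence "card {x. poly P x = 0} < card (UNIV::'a set)"
    using poly_roots_card_le[OF \<open>P \<noteq> 0\<close>] degP cardm unfolding p_def by linarith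
  hence "{x. poly P x = 0} \<noteq> UNIV" by (metis less_irrefl)
  then obtain z where "poly P z \<noteq> 0" by auto
  hence "abs_trace z \<noteq> 0" using polyP by simp
  hence "tk z \<noteq> 0" using tk[OF cardm, of z] by (metis of_nat_0)
  hence "psi z \<noteq> 1" unfolding psi_omega using tk[OF cardm, of z] omega_pow_ne1 by auto
  thus ?thesis by blast
qed

end




section \<open>Character sums\<close>

lemma sum_psi_hom:
  fixes A :: "'a::{field,finite} set" and h :: "'a \<Rightarrow> 'a"
  assumes cardm: "card (UNIV::'a set) = CHAR('a) ^ m"
    and addA: "\<And>x y. x \<in> A \<Longrightarrow> y \<in> A \<Longrightarrow> x + y \<in> A"
    and negA: "\<And>x. x \<in> A \<Longrightarrow> - x \<in> A"
    and hadd: "\<And>x y. x \<in> A \<Longrightarrow> y \<in> A \<Longrightarrow> h (x + y) = h x + h y"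
  shows "(\<Sum>c\<in>A. psi (h c)) = (if \<forall>c\<in>A. psi (h c) = 1 then of_nat (card A) else 0)"
proof (cases "\<forall>c\<in>A. psi (h c) = 1")
  case True thus ?thesis by simp
next
  case False
  then obtain c0 where c0: "c0 \<in> A" "psi (h c0) \<noteq> 1" by blast
  have diffA: "\<And>x y. x \<in> A \<Longrightarrow> y \<in> A \<Longrightarrow> x - y \<in> A"
    using addA negA by (metis diff_conv_add_uminus)
  have "(\<Sum>c\<in>A. psi (h c)) = (\<Sum>c\<in>A. psi (h (c + c0)))"
    by (rule sum.reindex_bij_witness[of A "\<lambda>c. c + c0" "\<lambda>c. c - c0"])
       (use c0 addA diffA in auto)
  also have "\<dots> = (\<Sum>c\<in>A. psi (h c)) * psi (h c0)"
    unfolding sum_distrib_right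
    by (rule sum.cong) (use c0 hadd psi_add[OF cardm] in auto)
  finally have "(\<Sum>c\<in>A. psi (h c)) * (1 - psi (h c0)) = 0" by (simp add: algebra_simps)
  hence "(\<Sum>c\<in>A. psi (h c)) = 0" using c0 by simp
  thus ?thesis using False by (simp only: if_False)
qed

lemma sum_psi_lin_UNIV:
  fixes y :: "'a::{field,finite}"
  assumes cardm: "card (UNIV::'a set) = CHAR('a) ^ m" and "m > 0"
  shows "(\<Sum>a\<in>UNIV. psi (a * y)) = (if y = 0 then of_nat (card (UNIV::'a set)) else 0)"
proof -
  have "(\<Sum>a\<in>UNIV. psi (a * y)) = (if \<forall>c\<in>UNIV. psi (c * y) = 1 then of_nat (card (UNIV::'a set)) else 0)"
    by (rule sum_psi_hom[OF cardm]) (auto simp: distrib_right)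
  moreover have "(\<forall>c\<in>UNIV. psi (c * y) = 1) \<longleftrightarrow> y = 0"
  proof
    assume all: "\<forall>c\<in>UNIV. psi (c * y) = 1"
    show "y = 0"
    proof (rule ccontr)
      assume "y \<noteq> 0"
      obtain z :: 'a where "psi z \<noteq> 1" using psi_nontriv[OF cardm \<open>m > 0\<close>] by blast
      moreover have "psi ((z / y) * y) = 1" using all by blast
      ultimately show False using \<open>y \<noteq> 0\<close> by simp
    qed
  qed (simp add: psi_zero[OF cardm])
  ultimately show ?thesis by simp
qed

locale wsetup =
  fixes K :: "'a::{field,finite} set" and n :: nat
  assumes sub: "is_subfield K"
    and cardL: "card (UNIV::'a set) = card K ^ 2"
    and cardK: "card K = CHAR('a) ^ n"
begin

lemma cardm: "card (UNIV::'a set) = CHAR('a) ^ (2*n)"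
  using cardL cardK by (simp add: power_mult[symmetric] mult.commute)

lemma K0: "0 \<in> K" and K1: "1 \<in> K"
  using sub unfolding is_subfield_def by auto
lemma Kadd: "x \<in> K \<Longrightarrow> y \<in> K \<Longrightarrow> x + y \<in> K"
  using sub unfolding is_subfield_def by auto
lemma Kmult: "x \<in> K \<Longrightarrow> y \<in> K \<Longrightarrow> x * y \<in> K"
  using sub unfolding is_subfield_def by auto
lemma Kneg: "x \<in> K \<Longrightarrow> - x \<in> K"
  using sub unfolding is_subfield_def by auto
lemma Kinv: "x \<in> K \<Longrightarrow> inverse x \<in> K"
  using sub unfolding is_subfield_def by auto
lemma Kdiff: "x \<in> K \<Longrightarrow> y \<in> K \<Longrightarrow> x - y \<in> K"
  using Kadd Kneg by (metis diff_conv_add_uminus)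
lemma Kdiv: "x \<in> K \<Longrightarrow> y \<in> K \<Longrightarrow> x / y \<in> K"
  using Kmult Kinv by (metis divide_inverse)
lemma Kpow: "x \<in> K \<Longrightarrow> x ^ k \<in> K"
  by (induction k) (auto intro: K1 Kmult)

lemma finK: "finite K" by simp

lemma q_ge2: "card K \<ge> 2"
proof -
  have "{0,1} \<subseteq> K" using K0 K1 by auto
  hence "card {0::'a,1} \<le> card K" by (intro card_mono) auto
  thus ?thesis by simp
qed

lemma n_pos: "n > 0"
  using q_ge2 cardK by (cases n) auto

lemma p_ge2: "CHAR('a) \<ge> 2" using ff_char_prime[where 'a='a] prime_ge_2_nat by blast

lemma K_pow1: assumes "c \<in> K" "c \<noteq> 0" shows "c ^ (card K - 1) = 1"
proof -
  define K' where "K' = K - {0}"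
  have cK': "card K' = card K - 1" unfolding K'_def using K0 by simp
  have "(\<Prod>y\<in>K'. c * y) = (\<Prod>y\<in>K'. y)"
  proof (rule prod.reindex_bij_witness[of _ "\<lambda>y. y / c" "\<lambda>y. c * y"])
    fix y assume "y \<in> K'"
    thus "c * (y / c) = y" "y / c \<in> K'" "c * y / c = y" "c * y \<in> K'"
      using assms Kdiv Kmult unfolding K'_def by auto
  qed simp
  hence "c ^ card K' * (\<Prod>y\<in>K'. y) = (\<Prod>y\<in>K'. y)"
    by (simp add: prod.distrib)
  moreover have "(\<Prod>y\<in>K'. y) \<noteq> 0" unfolding K'_def by simp
  ultimately show ?thesis using cK' by simp
qed

lemma K_powq: assumes "c \<in> K" shows "c ^ card K = c"
proof (cases "c = 0")
  case True thus ?thesis using q_ge2 by simp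
next
  case False
  have "c ^ card K = c * c ^ (card K - 1)" using q_ge2 by (metis Suc_diff_1 less_le_trans pos2 power_Suc)
  thus ?thesis using K_pow1[OF assms False] by simp
qed

lemma frobq_add: "((x::'a) + y) ^ card K = x ^ card K + y ^ card K"
  unfolding cardK by (rule frob_add)

lemma frobq_sum: "(sum (f::'b \<Rightarrow> 'a) A) ^ card K = (\<Sum>i\<in>A. f i ^ card K)"
  unfolding cardK by (rule frob_sum)

lemma L_powqq: "(x::'a) ^ (card K * card K) = x"
  using ff_pow_card[of x] cardL by (simp add: power2_eq_square)

lemma K_char: "x \<in> K \<longleftrightarrow> x ^ card K = x"
proof
  assume "x ^ card K = x"
  define P where "P = (monom (1::'a) (card K) + [:0,-1:])"
  have degP: "degree P = card K"
    unfolding P_def using q_ge2 by (subst degree_add_eq_left) (auto simp: degree_monom_eq)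
  have "P \<noteq> 0"
  proof
    assume "P = 0" hence "degree P = 0" by simp
    with degP q_ge2 show False by simp
  qed
  define R where "R = {y. poly P y = 0}"
  have "card R \<le> card K" using poly_roots_card_le[OF \<open>P \<noteq> 0\<close>] degP R_def by simp
  moreover have "K \<subseteq> R" unfolding R_def P_def using K_powq by (auto simp: poly_monom)
  moreover have "card K \<le> card R" using \<open>K \<subseteq> R\<close> by (intro card_mono) auto
  ultimately have "K = R" by (intro card_subset_eq) auto
  thus "x \<in> K" using \<open>x ^ card K = x\<close> unfolding R_def P_def by (auto simp: poly_monom)
qed (rule K_powq)

end




lemma powi_cong:
  fixes x :: "'a::field"
  assumes "x \<noteq> 0" "x ^ N = 1" "[a = b] (mod int N)"
  shows "x powi a = x powi b"
proof -
  obtain k where k: "b = a + int N * k" using assms(3) unfolding cong_iff_lin by blast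
  have "x powi b = x powi a * x powi (int N * k)"
    unfolding k using assms(1) by (rule power_int_add[OF disjI1])
  also have "x powi (int N * k) = (x ^ N) powi k"
    by (simp add: power_int_mult)
  finally show ?thesis using assms(2) by simp
qed

lemma orbit_dvd:
  fixes S G :: "'a::field set"
  assumes finS: "finite S" and finG: "finite G"
    and S0: "0 \<notin> S" and G1: "1 \<in> G" and G0: "0 \<notin> G"
    and Gmult: "\<And>x y. x \<in> G \<Longrightarrow> y \<in> G \<Longrightarrow> x * y \<in> G"
    and Ginv: "\<And>x. x \<in> G \<Longrightarrow> inverse x \<in> G"
    and Scl: "\<And>x c. x \<in> S \<Longrightarrow> c \<in> G \<Longrightarrow> c * x \<in> S"
  shows "card G dvd card S"
proof -
  define orb where "orb x = (\<lambda>c. c * x) ` G" for x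
  define C where "C = orb ` S"
  have orbS: "orb x \<subseteq> S" if "x \<in> S" for x using that Scl unfolding orb_def by auto
  have UC: "\<Union>C = S"
  proof
    show "\<Union>C \<subseteq> S" using orbS unfolding C_def by auto
    show "S \<subseteq> \<Union>C"
    proof
      fix x assume "x \<in> S"
      hence "x \<in> orb x" unfolding orb_def using G1 by force
      thus "x \<in> \<Union>C" unfolding C_def using \<open>x \<in> S\<close> by blast
    qed
  qed
  have cardorb: "card (orb x) = card G" if "x \<in> S" for x
  proof -
    have "x \<noteq> 0" using that S0 by auto
    hence "inj_on (\<lambda>c. c * x) G" by (auto intro: inj_onI)
    thus ?thesis unfolding orb_def by (rule card_image)
  qed
  have disj: "orb x = orb y" if ne: "orb x \<inter> orb y \<noteq> {}" for x y
  proof -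
    obtain c c' where cc: "c \<in> G" "c' \<in> G" "c * x = c' * y"
      using ne unfolding orb_def by auto
    have c0: "c \<noteq> 0" "c' \<noteq> 0" using cc G0 by auto
    have xy: "x = (inverse c * c') * y" using cc c0 by (simp add: field_simps)
    have yx: "y = (inverse c' * c) * x" using cc c0 by (simp add: field_simps)
    show ?thesis
    proof
      show "orb x \<subseteq> orb y"
      proof
        fix z assume "z \<in> orb x"
        then obtain e where e: "e \<in> G" "z = e * x" unfolding orb_def by auto
        hence "z = (e * (inverse c * c')) * y" using xy by (simp add: mult_ac)
        moreover have "e * (inverse c * c') \<in> G" using e cc Gmult Ginv by auto
        ultimately show "z \<in> orb y" unfolding orb_def by blast
      qed
      show "orb y \<subseteq> orb x"
      proof
        fix z assume "z \<in> orb y"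
        then obtain e where e: "e \<in> G" "z = e * y" unfolding orb_def by auto
        hence "z = (e * (inverse c' * c)) * x" using yx by (simp add: mult_ac)
        moreover have "e * (inverse c' * c) \<in> G" using e cc Gmult Ginv by auto
        ultimately show "z \<in> orb x" unfolding orb_def by blast
      qed
    qed
  qed
  have "card G * card C = card (\<Union>C)"
  proof (rule card_partition)
    show "finite C" unfolding C_def using finS by simp
    show "finite (\<Union>C)" using UC finS by simp
    show "\<And>c. c \<in> C \<Longrightarrow> card c = card G" unfolding C_def using cardorb by auto
    show "\<And>c1 c2. c1 \<in> C \<Longrightarrow> c2 \<in> C \<Longrightarrow> c1 \<noteq> c2 \<Longrightarrow> c1 \<inter> c2 = {}"
      unfolding C_def using disj by blast
  qed
  thus ?thesis using UC by (metis dvd_triv_left)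
qed

locale wsetup2 = wsetup K n for K :: "'a::{field,finite} set" and n +
  fixes d :: int and j :: nat
  assumes gcdd: "gcd d (int (card (UNIV::'a set)) - 1) = 1"
    and degj: "[d = int (CHAR('a)) ^ j] (mod (int (card K) - 1))"
begin

lemma Q_ge4: "card (UNIV::'a set) \<ge> 4"
proof -
  have "card K * card K \<ge> 2 * 2" using q_ge2 by (intro mult_mono) auto
  thus ?thesis using cardL by (simp add: power2_eq_square)
qed

lemma d_ne0: "d \<noteq> 0"
proof
  assume "d = 0"
  hence "gcd d (int (card (UNIV::'a set)) - 1) = int (card (UNIV::'a set)) - 1" using Q_ge4 by simp
  thus False using gcdd Q_ge4 by simp
qed

lemma pj_pos: "CHAR('a) ^ k > 0" using p_ge2 by simp

lemma zpj: "(0::'a) ^ (CHAR('a) ^ k) = 0" using pj_pos by simp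

lemma f_K: assumes "c \<in> K" shows "c powi d = c ^ (CHAR('a) ^ j)"
proof (cases "c = 0")
  case True thus ?thesis using d_ne0 p_ge2 by simp
next
  case False
  have eq: "int (card K - 1) = int (card K) - 1" using q_ge2 by simp
  have e: "int (CHAR('a) ^ j) = int (CHAR('a)) ^ j" by (rule of_nat_power)
  have "[d = int (CHAR('a) ^ j)] (mod int (card K - 1))" using degj unfolding e eq .
  hence "c powi d = c powi int (CHAR('a) ^ j)"
    by (rule powi_cong[OF False K_pow1[OF assms False]])
  thus ?thesis by (simp only: power_int_of_nat)
qed

lemma bezout_inv: obtains u :: int where
  "\<And>x::'a. (x powi d) powi u = x" "\<And>x::'a. (x powi u) powi d = x"
proof -
  obtain u v where uv: "u * d + v * (int (card (UNIV::'a set)) - 1) = 1"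
    using bezout_int[of d "int (card (UNIV::'a set)) - 1"] gcdd by auto
  have u0: "u \<noteq> 0"
  proof
    assume "u = 0"
    hence "v * (int (card (UNIV::'a set)) - 1) = 1" using uv by simp
    hence "int (card (UNIV::'a set)) - 1 dvd 1" by (metis dvd_triv_right)
    thus False using Q_ge4 by (simp add: zdvd1_eq)
  qed
  have Qm1: "int (card (UNIV::'a set)) - 1 = int (card (UNIV::'a set) - 1)" using Q_ge4 by simp
  have key: "x powi (d * u) = x" for x :: 'a
  proof (cases "x = 0")
    case True thus ?thesis using u0 d_ne0 by simp
  next
    case False
    have "[d * u = 1] (mod int (card (UNIV::'a set) - 1))"
    proof -
      have "1 = d * u + int (card (UNIV::'a set) - 1) * v" using uv[unfolded Qm1] by (metis mult.commute)
      thus ?thesis unfolding cong_iff_lin by blast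
    qed
    hence "x powi (d * u) = x powi 1" by (rule powi_cong[OF False ff_pow_card1[OF False]])
    thus ?thesis by simp
  qed
  have A1: "(x powi d) powi u = x" for x :: 'a using key by (simp add: power_int_mult[symmetric])
  have A2: "(x powi u) powi d = x" for x :: 'a using key by (simp add: power_int_mult[symmetric] mult.commute)
  show ?thesis by (rule that[OF A1 A2])
qed

lemma f_bij: "bij (\<lambda>x::'a. x powi d)"
proof -
  obtain u where u: "\<And>x::'a. (x powi d) powi u = x" "\<And>x::'a. (x powi u) powi d = x"
    using bezout_inv by blast
  show ?thesis
    by (rule bij_betw_byWitness[of _ "\<lambda>y. y powi u"]) (use u in auto)
qed

definition g :: "'a \<Rightarrow> 'a \<Rightarrow> 'a" where
  "g a x = x powi d + (a * x) ^ (CHAR('a) ^ j)"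

definition PP :: "'a \<Rightarrow> 'a \<Rightarrow> bool" where
  "PP a x \<longleftrightarrow> (\<forall>c\<in>K. psi (c ^ (CHAR('a) ^ j) * g a x) = 1)"

definition S :: "'a \<Rightarrow> 'a set" where
  "S a = {x. x \<noteq> 0 \<and> PP a x}"

lemma g_scale: assumes "c \<in> K" shows "g a (c * x) = c ^ (CHAR('a) ^ j) * g a x"
proof -
  have "(c * x) powi d = c ^ (CHAR('a) ^ j) * x powi d"
    using f_K[OF assms] by (simp add: power_int_mult_distrib)
  moreover have "(a * (c * x)) ^ (CHAR('a) ^ j) = c ^ (CHAR('a) ^ j) * (a * x) ^ (CHAR('a) ^ j)"
    by (simp add: power_mult_distrib mult_ac)
  ultimately show ?thesis unfolding g_def by (simp add: distrib_left)
qed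

lemma W_scale:
  assumes "c \<in> K" "c \<noteq> 0"
  shows "weil_sum d a = (\<Sum>x\<in>UNIV. psi (c ^ (CHAR('a) ^ j) * g a x))"
proof -
  have "weil_sum d a = (\<Sum>x\<in>UNIV. psi ((c * x) powi d + a * (c * x)))"
    unfolding weil_sum_def
    by (rule sum.reindex_bij_witness[of _ "\<lambda>x. c * x" "\<lambda>x. x / c"]) (use assms in auto)
  also have "\<dots> = (\<Sum>x\<in>UNIV. psi (c ^ (CHAR('a) ^ j) * g a x))"
  proof (rule sum.cong[OF refl])
    fix x
    have "psi ((c * x) powi d + a * (c * x)) = psi ((c * x) powi d) * psi (a * (c * x))"
      by (rule psi_add[OF cardm])
    also have "psi (a * (c * x)) = psi ((a * (c * x)) ^ (CHAR('a) ^ j))"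
      by (rule psi_frob[OF cardm, symmetric])
    also have "psi ((c * x) powi d) * \<dots> = psi ((c * x) powi d + (a * (c * x)) ^ (CHAR('a) ^ j))"
      by (rule psi_add[OF cardm, symmetric])
    also have "(c * x) powi d + (a * (c * x)) ^ (CHAR('a) ^ j) = g a (c * x)"
      unfolding g_def ..
    finally show "psi ((c * x) powi d + a * (c * x)) = psi (c ^ (CHAR('a) ^ j) * g a x)"
      using g_scale[OF assms(1)] by simp
  qed
  finally show ?thesis .
qed

lemma sumK: "(\<Sum>c\<in>K. psi (c ^ (CHAR('a) ^ j) * G)) =
    (if \<forall>c\<in>K. psi (c ^ (CHAR('a) ^ j) * G) = 1 then of_nat (card K) else 0)"
  by (rule sum_psi_hom[OF cardm]) (auto intro: Kadd Kneg simp: frob_add distrib_right)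

lemma PP0: "PP a 0"
  unfolding PP_def g_def using d_ne0 psi_zero[OF cardm] by (simp add: zpj)

lemma W_count: "of_nat (card K - 1) * weil_sum d a =
   of_nat (card K) * of_nat (card (S a) + 1) - of_nat (card (UNIV::'a set))"
proof -
  have "of_nat (card K - 1) * weil_sum d a = (\<Sum>c\<in>K-{0}. weil_sum d a)"
    using K0 by simp
  also have "\<dots> = (\<Sum>c\<in>K-{0}. \<Sum>x\<in>UNIV. psi (c ^ (CHAR('a) ^ j) * g a x))"
    by (rule sum.cong[OF refl]) (use W_scale in auto)
  also have "\<dots> = (\<Sum>x\<in>UNIV. \<Sum>c\<in>K-{0}. psi (c ^ (CHAR('a) ^ j) * g a x))"
    by (rule sum.swap)
  also have "\<dots> = (\<Sum>x\<in>UNIV. (if PP a x then of_nat (card K) else 0) - 1)"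
  proof (rule sum.cong[OF refl])
    fix x
    have "(\<Sum>c\<in>K-{0}. psi (c ^ (CHAR('a) ^ j) * g a x)) =
          (\<Sum>c\<in>K. psi (c ^ (CHAR('a) ^ j) * g a x)) - psi (0 ^ (CHAR('a) ^ j) * g a x)"
      using K0 by (simp add: sum_diff1)
    also have "psi (0 ^ (CHAR('a) ^ j) * g a x) = 1" using psi_zero[OF cardm] by (simp add: zpj)
    finally show "(\<Sum>c\<in>K-{0}. psi (c ^ (CHAR('a) ^ j) * g a x)) =
       (if PP a x then of_nat (card K) else 0) - 1"
      unfolding sumK PP_def by simp
  qed
  also have "\<dots> = of_nat (card K) * of_nat (card {x. PP a x}) - of_nat (card (UNIV::'a set))"
    by (simp add: sum_subtractf sum.If_cases)
  also have "{x. PP a x} = insert 0 (S a)" unfolding S_def using PP0 by auto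
  also have "card (insert 0 (S a)) = card (S a) + 1" unfolding S_def by simp
  finally show ?thesis by simp
qed

lemma S_dvd: "card K - 1 dvd card (S a)"
proof -
  have "card (K - {0}) dvd card (S a)"
  proof (rule orbit_dvd)
    show "finite (S a)" "finite (K - {0})" by auto
    show "0 \<notin> S a" unfolding S_def by simp
    show "1 \<in> K - {0}" using K1 by simp
    show "0 \<notin> K - {0}" by simp
    show "\<And>x y. x \<in> K - {0} \<Longrightarrow> y \<in> K - {0} \<Longrightarrow> x * y \<in> K - {0}" using Kmult by auto
    show "\<And>x. x \<in> K - {0} \<Longrightarrow> inverse x \<in> K - {0}" using Kinv by auto
    fix x c assume x: "x \<in> S a" and c: "c \<in> K - {0}"
    have "PP a (c * x)" unfolding PP_def
    proof
      fix c' assume "c' \<in> K"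
      hence "c' * c \<in> K" using c Kmult by auto
      hence "psi ((c' * c) ^ (CHAR('a) ^ j) * g a x) = 1" using x unfolding S_def PP_def by auto
      thus "psi (c' ^ (CHAR('a) ^ j) * g a (c * x)) = 1"
        using g_scale[of c a x] c by (simp add: power_mult_distrib mult_ac)
    qed
    thus "c * x \<in> S a" using x c unfolding S_def by auto
  qed
  thus ?thesis using K0 by simp
qed

lemma W_form: obtains N :: nat where "card (S a) = (card K - 1) * N"
  "weil_sum d a = of_int (int (card K) * (int N - 1))"
proof -
  obtain N where N: "card (S a) = (card K - 1) * N" using S_dvd by (auto elim: dvdE)
  have q1: "(of_nat (card K - 1) :: complex) \<noteq> 0" using q_ge2 by simp
  have Q: "card (UNIV::'a set) = card K * card K" using cardL by (simp add: power2_eq_square)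
  have "of_nat (card K - 1) * weil_sum d a =
        of_nat (card K - 1) * (of_int (int (card K) * (int N - 1)) :: complex)"
  proof -
    have e: "int (card K - 1) = int (card K) - 1" using q_ge2 by simp
    have "of_nat (card K - 1) * weil_sum d a =
       of_int (int (card K) * int ((card K - 1) * N + 1) - int (card K) * int (card K))"
      using W_count[of a] unfolding N Q by simp
    also have "int ((card K - 1) * N + 1) = int (card K - 1) * int N + 1"
      by (simp only: of_nat_add of_nat_mult of_nat_1)
    also have "int (card K) * (int (card K - 1) * int N + 1) - int (card K) * int (card K) =
               int (card K - 1) * (int (card K) * (int N - 1))"
      unfolding e by (simp add: algebra_simps)
    finally show ?thesis by simp
  qed
  hence "weil_sum d a = of_int (int (card K) * (int N - 1))" using q1 by simp
  thus ?thesis using N that by blast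
qed

end




context wsetup2
begin

lemma m_pos: "2 * n > 0" using n_pos by simp

lemma f_neg: "(- x :: 'a) powi d = - (x powi d)"
proof (cases "CHAR('a) = 2")
  case True
  have e1: "- x = x" by (rule uminus_CHAR_2[OF True])
  have e2: "- (x powi d) = x powi d" by (rule uminus_CHAR_2[OF True])
  show ?thesis by (simp only: e1 e2)
next
  case False
  hence "odd (CHAR('a))" using p_ge2 ff_char_prime[where 'a='a] prime_odd_nat by fastforce
  hence "odd (card (UNIV::'a set))" unfolding cardm by simp
  hence ev: "even (int (card (UNIV::'a set)) - 1)" by simp
  have "odd d"
  proof
    assume "even d"
    hence "2 dvd gcd d (int (card (UNIV::'a set)) - 1)" using ev by simp
    thus False using gcdd by simp
  qed
  thus ?thesis by simp
qed

lemma W0: "weil_sum d (0::'a) = 0"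
proof -
  have "weil_sum d (0::'a) = (\<Sum>(x::'a)\<in>UNIV. psi (x powi d))" unfolding weil_sum_def by simp
  also have "\<dots> = (\<Sum>(y::'a)\<in>UNIV. psi (y::'a))"
    by (rule sum.reindex_bij_betw[OF f_bij])
  also have "\<dots> = (\<Sum>(y::'a)\<in>UNIV. psi (y * (1::'a)))" by simp
  also have "\<dots> = 0" unfolding sum_psi_lin_UNIV[OF cardm m_pos] by simp
  finally show ?thesis .
qed

lemma psi_f0: "psi ((0::'a) powi d) = 1"
  using d_ne0 psi_zero[OF cardm] by simp

lemma Wsum1: "(\<Sum>(a::'a)\<in>UNIV. weil_sum d (a::'a)) = of_nat (card (UNIV::'a set))"
proof -
  have "(\<Sum>(a::'a)\<in>UNIV. weil_sum d (a::'a)) = (\<Sum>(a::'a)\<in>UNIV. \<Sum>(x::'a)\<in>UNIV. psi (x powi d) * psi (a * x))"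
    unfolding weil_sum_def by (simp add: psi_add[OF cardm])
  also have "\<dots> = (\<Sum>(x::'a)\<in>UNIV. psi (x powi d) * (\<Sum>(a::'a)\<in>UNIV. psi (a * x)))"
    by (subst sum.swap) (simp add: sum_distrib_left)
  also have "\<dots> = (\<Sum>(x::'a)\<in>UNIV. if x = 0 then of_nat (card (UNIV::'a set)) else 0)"
    by (rule sum.cong[OF refl]) (simp add: sum_psi_lin_UNIV[OF cardm m_pos] psi_f0)
  also have "\<dots> = of_nat (card (UNIV::'a set))" by simp
  finally show ?thesis .
qed

lemma Wsum2: "(\<Sum>(a::'a)\<in>UNIV. weil_sum d (a::'a) * weil_sum d a) = of_nat (card (UNIV::'a set)) ^ 2"
proof -
  have "(\<Sum>(a::'a)\<in>UNIV. weil_sum d (a::'a) * weil_sum d a) =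
     (\<Sum>(a::'a)\<in>UNIV. \<Sum>(x::'a)\<in>UNIV. \<Sum>(y::'a)\<in>UNIV. psi (x powi d + y powi d) * psi (a * (x + y)))"
  proof (rule sum.cong[OF refl])
    fix a
    have "weil_sum d (a::'a) * weil_sum d a =
       (\<Sum>(x::'a)\<in>UNIV. \<Sum>(y::'a)\<in>UNIV. psi (x powi d + a * x) * psi (y powi d + a * y))"
      unfolding weil_sum_def by (simp add: sum_product)
    also have "\<dots> = (\<Sum>(x::'a)\<in>UNIV. \<Sum>(y::'a)\<in>UNIV. psi (x powi d + y powi d) * psi (a * (x + y)))"
    proof (intro sum.cong[OF refl])
      fix x y :: 'a
      have "psi (x powi d + a * x) * psi (y powi d + a * y) = psi ((x powi d + y powi d) + a * (x + y))"
        by (simp add: psi_add[OF cardm, symmetric] algebra_simps)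
      thus "psi (x powi d + a * x) * psi (y powi d + a * y) = psi (x powi d + y powi d) * psi (a * (x + y))"
        by (simp add: psi_add[OF cardm])
    qed
    finally show "weil_sum d (a::'a) * weil_sum d a =
       (\<Sum>(x::'a)\<in>UNIV. \<Sum>(y::'a)\<in>UNIV. psi (x powi d + y powi d) * psi (a * (x + y)))" .
  qed
  also have "\<dots> = (\<Sum>(x::'a)\<in>UNIV. \<Sum>(y::'a)\<in>UNIV. psi (x powi d + y powi d) * (\<Sum>(a::'a)\<in>UNIV. psi (a * (x + y))))"
    by (subst sum.swap, rule sum.cong[OF refl], subst sum.swap) (simp add: sum_distrib_left)
  also have "\<dots> = (\<Sum>(x::'a)\<in>UNIV. \<Sum>(y::'a)\<in>UNIV. if y = - x then of_nat (card (UNIV::'a set)) else 0)"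
  proof (intro sum.cong[OF refl])
    fix x y :: 'a
    show "psi (x powi d + y powi d) * (\<Sum>(a::'a)\<in>UNIV. psi (a * (x + y))) =
          (if y = - x then of_nat (card (UNIV::'a set)) else 0)"
    proof (cases "y = - x")
      case True
      hence "x powi d + y powi d = 0" using f_neg by simp
      thus ?thesis using True by (simp add: sum_psi_lin_UNIV[OF cardm m_pos] psi_zero[OF cardm])
    next
      case False
      hence "x + y \<noteq> 0" by (metis add_eq_0_iff)
      thus ?thesis using False by (simp add: sum_psi_lin_UNIV[OF cardm m_pos])
    qed
  qed
  also have "\<dots> = of_nat (card (UNIV::'a set)) ^ 2" by (simp add: power2_eq_square)
  finally show ?thesis .
qed

definition Nf :: "'a \<Rightarrow> nat" where
  "Nf a = card (S a) div (card K - 1)"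

lemma Nf: "card (S a) = (card K - 1) * Nf a"
  "weil_sum d a = of_int (int (card K) * (int (Nf a) - 1))"
proof -
  obtain N where N: "card (S a) = (card K - 1) * N"
    "weil_sum d a = of_int (int (card K) * (int N - 1))" by (rule W_form)
  have "N = Nf a" unfolding Nf_def N(1) using q_ge2 by simp
  thus "card (S a) = (card K - 1) * Nf a" "weil_sum d a = of_int (int (card K) * (int (Nf a) - 1))"
    using N by auto
qed

lemma exists_N0_or_full:
  "(\<exists>a. a \<noteq> 0 \<and> Nf a = 0) \<or> (\<exists>a. a \<noteq> 0 \<and> Nf a = card K + 1)"
proof (rule ccontr)
  assume H: "\<not> ?thesis"
  define A where "A = (UNIV - {0::'a})"
  define v where "v a = int (Nf a) - 1" for a
  define q where "q = int (card K)"
  have q2: "q \<ge> 2" unfolding q_def using q_ge2 by simp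
  have W: "weil_sum d a = of_int (q * v a)" for a unfolding v_def q_def using Nf(2) .
  have Qq: "of_nat (card (UNIV::'a set)) = (of_int (q * q) :: complex)"
    unfolding q_def using cardL by (simp add: power2_eq_square)
  have s1: "(\<Sum>a\<in>A. weil_sum d a) = of_nat (card (UNIV::'a set))"
    using Wsum1 W0 unfolding A_def by (simp add: sum_diff1)
  have s2: "(\<Sum>a\<in>A. weil_sum d a * weil_sum d a) = of_nat (card (UNIV::'a set)) ^ 2"
    using Wsum2 W0 unfolding A_def by (simp add: sum_diff1)
  have "of_int (\<Sum>a\<in>A. q * v a) = (of_int (q * q) :: complex)"
    using s1 unfolding W Qq by simp
  hence "q * (\<Sum>a\<in>A. v a) = q * q" by (simp only: of_int_eq_iff sum_distrib_left)
  hence sv: "(\<Sum>a\<in>A. v a) = q" using q2 by simp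
  have "of_int (\<Sum>a\<in>A. (q * v a) * (q * v a)) = (of_int ((q * q) * (q * q)) :: complex)"
    using s2 unfolding W Qq by (simp add: power2_eq_square)
  hence "(\<Sum>a\<in>A. (q * v a) * (q * v a)) = (q * q) * (q * q)"
    by (simp only: of_int_eq_iff)
  hence "(\<Sum>a\<in>A. (q * q) * (v a * v a)) = (q * q) * (q * q)"
    by (simp add: algebra_simps)
  hence "(q * q) * (\<Sum>a\<in>A. v a * v a) = (q * q) * (q * q)"
    by (simp only: sum_distrib_left)
  hence sv2: "(\<Sum>a\<in>A. v a * v a) = q * q" using q2 by simp
  have vnn: "v a \<ge> 0" if "a \<in> A" for a
  proof -
    have "Nf a \<noteq> 0" using H that unfolding A_def by auto
    thus ?thesis unfolding v_def by simp
  qed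
  have vle: "v a \<le> q" if "a \<in> A" for a
    using member_le_sum[of a A v] that vnn sv by auto
  have "(\<Sum>a\<in>A. v a * (q - v a)) = q * q - q * q"
    using sv sv2 by (simp add: algebra_simps sum_subtractf sum_distrib_left[symmetric])
  hence "(\<Sum>a\<in>A. v a * (q - v a)) = 0" by simp
  moreover have nn: "\<And>a. a \<in> A \<Longrightarrow> 0 \<le> v a * (q - v a)" using vnn vle by simp
  moreover have "finite A" by simp
  ultimately have z: "\<forall>a\<in>A. v a * (q - v a) = 0"
    using sum_nonneg_eq_0_iff[of A "\<lambda>a. v a * (q - v a)", OF \<open>finite A\<close> nn] by simp
  obtain a where a: "a \<in> A" "v a \<noteq> 0"
  proof (rule ccontr)
    assume "\<not> thesis"
    hence "\<forall>a\<in>A. v a = 0" using that by blast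
    hence "(\<Sum>a\<in>A. v a) = 0" by simp
    thus False using sv q2 by simp
  qed
  hence "v a = q" using z by auto
  hence "int (Nf a) = int (card K) + 1" unfolding v_def q_def by linarith
  hence "Nf a = card K + 1" by linarith
  thus False using H a unfolding A_def by auto
qed

lemma full_PP:
  assumes "a \<noteq> 0" "Nf a = card K + 1"
  shows "PP a x"
proof (cases "x = 0")
  case True thus ?thesis using PP0 by simp
next
  case False
  have "card (S a) = (card K - 1) * (card K + 1)" using Nf(1)[of a] assms by simp
  also have "\<dots> = card (UNIV::'a set) - 1"
    using cardL q_ge2 by (simp add: power2_eq_square algebra_simps)
  also have "\<dots> = card (UNIV - {0::'a})" by simp
  finally have "S a = UNIV - {0}"
    by (intro card_subset_eq) (auto simp: S_def)
  thus ?thesis using False unfolding S_def by auto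
qed

end




section \<open>Valuations\<close>

lemma nu_lower:
  assumes "p > 1"
  shows "nu_p p (of_int (int (p ^ k) * z)) \<ge> ereal (real k)"
proof -
  have "ereal (real k / real (1::nat)) \<in> {ereal (real a / real b) | a b. b > 0 \<and>
          algebraic_int ((of_int (int (p ^ k) * z) :: complex) ^ b / of_nat p ^ a)}"
  proof -
    have "(of_int (int (p ^ k) * z) :: complex) ^ 1 / of_nat p ^ k = of_int z"
      using assms by simp
    hence "algebraic_int ((of_int (int (p ^ k) * z) :: complex) ^ 1 / of_nat p ^ k)"
      by (simp add: int_imp_algebraic_int)
    thus ?thesis by blast
  qed
  hence "ereal (real k / real (1::nat)) \<le> nu_p p (of_int (int (p ^ k) * z))"
    unfolding nu_p_def by (rule Sup_upper)
  thus ?thesis by simp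
qed

lemma nu_exact:
  assumes "p > 1"
  shows "nu_p p (- of_nat (p ^ k)) = ereal (real k)"
proof (rule order.antisym)
  show "ereal (real k) \<le> nu_p p (- of_nat (p ^ k))"
    using nu_lower[OF assms, of k "-1"] by simp
  show "nu_p p (- of_nat (p ^ k)) \<le> ereal (real k)"
    unfolding nu_p_def
  proof (rule Sup_least)
    fix x assume "x \<in> {ereal (real a / real b) | a b. b > 0 \<and>
          algebraic_int ((- of_nat (p ^ k) :: complex) ^ b / of_nat p ^ a)}"
    then obtain a b where ab: "x = ereal (real a / real b)" "b > 0"
      "algebraic_int ((- of_nat (p ^ k) :: complex) ^ b / of_nat p ^ a)" by blast
    have "a \<le> k * b"
    proof (rule ccontr)
      assume "\<not> a \<le> k * b"
      define e where "e = a - k * b"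
      have e: "a = k * b + e" "e > 0" using \<open>\<not> a \<le> k * b\<close> unfolding e_def by linarith+
      define z where "z = (- of_nat (p ^ k) :: complex) ^ b / of_nat p ^ a"
      have pn0: "(of_nat p :: complex) \<noteq> 0" using assms by simp
      have z_eq: "z = (-1) ^ b / of_nat p ^ e"
      proof -
        have "(- of_nat (p ^ k) :: complex) ^ b = (-1) ^ b * (of_nat p ^ k) ^ b"
          by (subst power_minus) (simp only: of_nat_power)
        also have "(of_nat p ^ k :: complex) ^ b = of_nat p ^ (k * b)" by (simp only: power_mult)
        finally have "(- of_nat (p ^ k) :: complex) ^ b = (-1) ^ b * of_nat p ^ (k * b)" .
        moreover have "(of_nat p :: complex) ^ a = of_nat p ^ (k * b) * of_nat p ^ e"
          by (simp add: e power_add)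
        ultimately show ?thesis unfolding z_def using pn0 by simp
      qed
      have "z \<in> \<rat>" unfolding z_eq by (intro Rats_divide Rats_power) auto
      moreover have "algebraic_int z" using ab(3) unfolding z_def .
      ultimately have "z \<in> \<int>" by (rule rational_algebraic_int_is_int[rotated])
      then obtain m where m: "z = of_int m" by (elim Ints_cases)
      hence "(of_int (m * int p ^ e) :: complex) = (-1) ^ b"
        using z_eq pn0 by (simp add: field_simps)
      also have "((-1) ^ b :: complex) = of_int ((-1) ^ b)" by simp
      finally have eq: "m * int p ^ e = (-1) ^ b" by (simp only: of_int_eq_iff)
      have "int p ^ e dvd (-1) ^ b" unfolding eq[symmetric] by (rule dvd_triv_right)
      moreover have "((-1) ^ b :: int) dvd 1" by (simp add: is_unit_power_iff)
      ultimately have "int p ^ e dvd 1" by (rule dvd_trans)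
      hence "\<bar>int p ^ e\<bar> = 1" by (simp only: zdvd1_eq)
      hence "int p ^ e = 1" by simp
      moreover have "1 < int p ^ e" using assms e(2) by (intro one_less_power) auto
      ultimately show False by simp
    qed
    hence "real a \<le> real k * real b" by (metis of_nat_le_iff of_nat_mult)
    hence "real a / real b \<le> real k" using ab(2) by (simp add: divide_le_eq)
    thus "x \<le> ereal (real k)" using ab(1) by simp
  qed
qed




context wsetup2
begin

lemma psi_ne0: "psi (x::'a) \<noteq> 0"
  using psi_neg[OF cardm, of x] by auto

lemma psi_eq_imp: "psi (A::'a) = psi B \<Longrightarrow> psi (A - B) = 1"
proof -
  assume e: "psi A = psi B"
  have "psi (A - B) * psi B = psi A" by (rule psi_diff[OF cardm])
  hence "psi (A - B) * psi B = 1 * psi B" using e by simp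
  thus ?thesis using psi_ne0[of B] mult_right_cancel by blast
qed

lemma auto_arg:
  assumes a0: "a0 \<noteq> 0" and PPall: "\<And>x. PP a0 x"
  shows "\<exists>i. \<forall>x::'a. x powi d = x ^ (CHAR('a) ^ i)"
proof -
  obtain u where u1: "\<And>x::'a. (x powi d) powi u = x" and u2: "\<And>x::'a. (x powi u) powi d = x"
    using bezout_inv by blast
  define F where "F y = y powi u" for y :: 'a
  have h1: "psi (x powi d) * psi (a0 * x) = 1" for x
  proof -
    have "psi (1 ^ (CHAR('a) ^ j) * g a0 x) = 1" using PPall[of x] K1 unfolding PP_def by blast
    hence "psi (x powi d + (a0 * x) ^ (CHAR('a) ^ j)) = 1" unfolding g_def by simp
    thus ?thesis by (simp only: psi_add[OF cardm] psi_frob[OF cardm])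
  qed
  have h2: "psi y * psi (a0 * F y) = 1" for y
    using h1[of "F y"] unfolding F_def u2 .
  have Fmult: "F (x * y) = F x * F y" for x y unfolding F_def by (rule power_int_mult_distrib)
  have Fsurj: "F (x powi d) = x" for x unfolding F_def by (rule u1)
  have step: "psi (a0 * F (y + z)) = psi (a0 * (F y + F z))" for y z
  proof -
    have c1: "psi (a0 * F (y + z)) * (psi y * psi z) = 1"
      using h2[of "y+z"] unfolding psi_add[OF cardm] by (simp only: mult_ac)
    have "psi (a0 * (F y + F z)) * (psi y * psi z) =
          (psi y * psi (a0 * F y)) * (psi z * psi (a0 * F z))"
      by (simp only: distrib_left psi_add[OF cardm] mult_ac)
    also have "\<dots> = 1" using h2[of y] h2[of z] by simp
    finally have c2: "psi (a0 * (F y + F z)) * (psi y * psi z) = 1" .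
    have "psi y * psi z \<noteq> 0" using c1 by auto
    thus ?thesis using c1 c2 by (metis mult_right_cancel)
  qed
  have Fadd: "F (y + z) = F y + F z" for y z
  proof -
    define D where "D = F (y + z) - F y - F z"
    have wD: "psi (a0 * w * D) = 1" for w
    proof -
      define t where "t = w powi d"
      have Ft: "F t = w" unfolding t_def by (rule Fsurj)
      have "psi (a0 * F (t * (y + z))) = psi (a0 * (F (t * y) + F (t * z)))"
        using step[of "t * y" "t * z"] by (simp only: distrib_left)
      hence "psi (a0 * (w * F (y + z))) = psi (a0 * (w * F y + w * F z))"
        by (simp only: Fmult Ft)
      hence "psi (a0 * (w * F (y + z)) - a0 * (w * F y + w * F z)) = 1" by (rule psi_eq_imp)
      moreover have "a0 * (w * F (y + z)) - a0 * (w * F y + w * F z) = a0 * w * D"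
        unfolding D_def by (simp add: algebra_simps)
      ultimately show ?thesis by simp
    qed
    have "D = 0"
    proof (rule ccontr)
      assume D0: "D \<noteq> 0"
      obtain z0 :: 'a where z0: "psi z0 \<noteq> 1" using psi_nontriv[OF cardm m_pos] by blast
      have "psi (a0 * (z0 / (a0 * D)) * D) = 1" by (rule wD)
      moreover have "a0 * (z0 / (a0 * D)) * D = z0" using a0 D0 by (simp add: field_simps)
      ultimately show False using z0 by simp
    qed
    hence "F (y + z) - (F y + F z) = 0" unfolding D_def by (simp only: diff_diff_eq)
    thus ?thesis by (simp only: right_minus_eq)
  qed
  define tau where "tau x = F (x ^ (CHAR('a) ^ j))" for x
  have tadd: "tau (x + y) = tau x + tau y" for x y unfolding tau_def by (simp only: frob_add Fadd)
  have tmult: "tau (x * y) = tau x * tau y" for x y unfolding tau_def by (simp only: power_mult_distrib Fmult)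
  have tK: "tau c = c" if "c \<in> K" for c
  proof -
    have "c ^ (CHAR('a) ^ j) = c powi d" using f_K[OF that] by simp
    thus ?thesis unfolding tau_def by (simp only: Fsurj)
  qed
  have finv: "(tau x) powi d = x ^ (CHAR('a) ^ j)" for x unfolding tau_def F_def by (rule u2)
  have "K \<noteq> UNIV"
  proof
    assume "K = UNIV"
    hence "card K = card K * card K" using cardL by (simp add: power2_eq_square)
    thus False using q_ge2 by simp
  qed
  then obtain th where th: "th \<notin> K" by blast
  define s where "s = th + th ^ card K"
  define t where "t = th * th ^ card K"
  have thqq: "(th ^ card K) ^ card K = th" by (simp only: power_mult[symmetric] L_powqq)
  have sK: "s \<in> K" unfolding K_char s_def frobq_add thqq by (simp only: add.commute)
  have tK': "t \<in> K" unfolding K_char t_def power_mult_distrib thqq by (simp only: mult.commute)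
  have quad: "th * th + t = s * th" unfolding s_def t_def by (simp add: algebra_simps)
  have "tau (th * th + t) = tau (s * th)" using quad by simp
  hence tquad: "tau th * tau th + t = s * tau th" by (simp only: tadd tmult tK[OF tK'] tK[OF sK])
  have "(tau th - th) * (tau th - th ^ card K) = (tau th * tau th + t) - s * tau th"
    unfolding s_def t_def by (simp add: algebra_simps)
  also have "\<dots> = 0" using tquad by simp
  finally have troot: "tau th = th \<or> tau th = th ^ card K" by simp
  have span: "\<exists>c1\<in>K. \<exists>c2\<in>K. x = c1 + c2 * th" for x
  proof -
    define phi where "phi = (\<lambda>(c1, c2). c1 + c2 * th)"
    have inj: "inj_on phi (K \<times> K)"
    proof (rule inj_onI)
      fix v w assume v: "v \<in> K \<times> K" and w: "w \<in> K \<times> K" and e: "phi v = phi w"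
      obtain c1 c2 where vv: "v = (c1, c2)" by (cases v)
      obtain e1 e2 where ww: "w = (e1, e2)" by (cases w)
      have K4: "c1 \<in> K" "c2 \<in> K" "e1 \<in> K" "e2 \<in> K" using v w vv ww by auto
      have eq: "c1 + c2 * th = e1 + e2 * th" using e vv ww unfolding phi_def by simp
      have "c2 = e2"
      proof (rule ccontr)
        assume "c2 \<noteq> e2"
        hence "th = (e1 - c1) / (c2 - e2)" using eq by (simp add: field_simps)
        hence "th \<in> K" using K4 Kdiff Kdiv by simp
        thus False using th by simp
      qed
      thus "v = w" using eq vv ww by simp
    qed
    have "card (phi ` (K \<times> K)) = card (UNIV::'a set)"
      using card_image[OF inj] cardL by (simp add: card_cartesian_product power2_eq_square)
    hence "phi ` (K \<times> K) = UNIV" by (simp add: card_eq_UNIV_imp_eq_UNIV)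
    hence "x \<in> phi ` (K \<times> K)" by simp
    thus ?thesis unfolding phi_def by auto
  qed
  have tform: "tau x = c1 + c2 * tau th" if "c1 \<in> K" "c2 \<in> K" "x = c1 + c2 * th" for x c1 c2
    using that by (simp only: tadd tmult tK)
  from troot show ?thesis
  proof
    assume A: "tau th = th"
    have "x powi d = x ^ (CHAR('a) ^ j)" for x :: 'a
    proof -
      obtain c1 c2 where c: "c1 \<in> K" "c2 \<in> K" "x = c1 + c2 * th" using span[of x] by blast
      have "tau x = x" using tform[OF c] A c(3) by simp
      thus ?thesis using finv[of x] by simp
    qed
    thus ?thesis by blast
  next
    assume B: "tau th = th ^ card K"
    have "x powi d = x ^ (CHAR('a) ^ (j + n))" for x :: 'a
    proof -
      obtain c1 c2 where c: "c1 \<in> K" "c2 \<in> K" "x = c1 + c2 * th" using span[of x] by blast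
      have "x ^ card K = c1 ^ card K + c2 ^ card K * th ^ card K"
        unfolding c(3) frobq_add power_mult_distrib ..
      also have "\<dots> = c1 + c2 * th ^ card K" using K_powq c by simp
      also have "\<dots> = tau x" using tform[OF c] B by simp
      finally have "(x ^ card K) powi d = x ^ (CHAR('a) ^ j)" using finv[of x] by simp
      moreover have "(x ^ card K) powi d = (x powi d) ^ card K"
        by (simp only: power_int_power power_int_power' mult.commute)
      ultimately have e: "(x powi d) ^ card K = x ^ (CHAR('a) ^ j)" by simp
      have "x powi d = ((x powi d) ^ card K) ^ card K" by (simp only: power_mult[symmetric] L_powqq)
      also have "\<dots> = (x ^ (CHAR('a) ^ j)) ^ card K" by (simp only: e)
      also have "\<dots> = x ^ (CHAR('a) ^ (j + n))" unfolding cardK by (simp only: power_mult[symmetric] power_add)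
      finally show ?thesis .
    qed
    thus ?thesis by blast
  qed
qed

lemma degen_from:
  assumes H: "\<forall>x::'a. x powi d = x ^ (CHAR('a) ^ i)"
  shows "degenerate CHAR('a) (card (UNIV::'a set)) d"
proof -
  define M where "M = card (UNIV::'a set) - 1"
  have M3: "M \<ge> 3" unfolding M_def using Q_ge4 by simp
  have intM: "int (card (UNIV::'a set)) - 1 = int M" unfolding M_def using Q_ge4 by simp
  define R where "R = (d - int (CHAR('a) ^ i)) mod int M"
  have R0: "R \<ge> 0" "R < int M" unfolding R_def using M3 by simp_all
  define r where "r = nat R"
  have rR: "int r = R" unfolding r_def using R0 by simp
  have rlt: "r < M" using R0 rR by linarith
  have xr: "x ^ r = 1" if x0: "x \<noteq> 0" for x :: 'a
  proof -
    have "x powi d = x powi int (CHAR('a) ^ i)" unfolding power_int_of_nat using H by blast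
    hence "x powi (d - int (CHAR('a) ^ i)) = 1" using x0 by (simp add: power_int_diff)
    moreover have "x powi (d - int (CHAR('a) ^ i)) = x powi R"
    proof (rule powi_cong[OF x0])
      show "x ^ M = 1" unfolding M_def by (rule ff_pow_card1[OF x0])
      show "[d - int (CHAR('a) ^ i) = R] (mod int M)" unfolding R_def cong_def by simp
    qed
    ultimately have "x powi R = 1" by simp
    thus ?thesis unfolding rR[symmetric] by simp
  qed
  have "r = 0"
  proof (rule ccontr)
    assume "r \<noteq> 0"
    define P where "P = monom (1::'a) r + [:-1:]"
    have degP: "degree P = r" unfolding P_def using \<open>r \<noteq> 0\<close>
      by (subst degree_add_eq_left) (auto simp: degree_monom_eq)
    have "P \<noteq> 0"
    proof
      assume "P = 0" hence "degree P = 0" by simp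
      with degP \<open>r \<noteq> 0\<close> show False by simp
    qed
    have "UNIV - {0} \<subseteq> {x. poly P x = 0}" unfolding P_def using xr by (auto simp: poly_monom)
    hence "card (UNIV - {0::'a}) \<le> card {x. poly P x = 0}" by (intro card_mono) auto
    moreover have "card (UNIV - {0::'a}) = M" unfolding M_def by simp
    ultimately show False using poly_roots_card_le[OF \<open>P \<noteq> 0\<close>] degP rlt by simp
  qed
  hence "R = 0" using rR by simp
  hence "[d = int (CHAR('a) ^ i)] (mod int M)" unfolding R_def
    by (simp add: cong_iff_dvd_diff mod_eq_0_iff_dvd)
  thus ?thesis unfolding degenerate_def intM by (auto simp: of_nat_power)
qed

end


theorem corollary4p4:
  fixes K :: "'l::{field,finite} set" and d :: int and n :: nat
  assumes "is_subfield K"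
    and "card (UNIV :: 'l set) = card K ^ 2"
    and "card K = CHAR('l) ^ n"
    and "gcd d (int (card (UNIV :: 'l set)) - 1) = 1"
    and "degenerate CHAR('l) (card K) d"
    and "\<not> degenerate CHAR('l) (card (UNIV :: 'l set)) d"
  shows "V_val TYPE('l) d = ereal (real n) \<and>
         (\<exists>a::'l. a \<noteq> 0 \<and> weil_sum d a = - of_nat (card K))"
proof -
  obtain j where j: "[d = int CHAR('l) ^ j] (mod (int (card K) - 1))"
    using assms(5) unfolding degenerate_def by blast
  interpret W: wsetup2 K n d j
    by unfold_locales (use assms j in auto)
  have p1: "CHAR('l) > 1" using W.p_ge2 by simp
  have a0: "\<exists>a::'l. a \<noteq> 0 \<and> W.Nf a = 0"
  proof -
    { assume "\<not> (\<exists>a::'l. a \<noteq> 0 \<and> W.Nf a = 0)"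
      then obtain a :: 'l where a: "a \<noteq> 0" "W.Nf a = card K + 1"
        using W.exists_N0_or_full by blast
      obtain i where "\<forall>x::'l. x powi d = x ^ (CHAR('l) ^ i)"
        using W.auto_arg[OF a(1) W.full_PP[OF a]] by blast
      hence "degenerate CHAR('l) (card (UNIV :: 'l set)) d" by (rule W.degen_from)
      hence False using assms(6) by simp }
    thus ?thesis by blast
  qed
  then obtain a0 :: 'l where a0: "a0 \<noteq> 0" "W.Nf a0 = 0" by blast
  have Wa0: "weil_sum d a0 = - of_nat (card K)"
    using W.Nf(2)[of a0] a0 by simp
  have Wform: "weil_sum d a = of_int (int (CHAR('l) ^ n) * (int (W.Nf a) - 1))" for a :: 'l
    using W.Nf(2)[of a] assms(3) by simp
  have "V_val TYPE('l) d = ereal (real n)"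
    unfolding V_val_def
  proof (rule Min_eqI)
    show "finite ((\<lambda>a::'l. nu_p CHAR('l) (weil_sum d a)) ` (UNIV - {0}))" by simp
    show "ereal (real n) \<le> y" if yin: "y \<in> (\<lambda>a::'l. nu_p CHAR('l) (weil_sum d a)) ` (UNIV - {0})" for y
    proof -
      obtain a :: 'l where "y = nu_p CHAR('l) (weil_sum d a)" using yin by blast
      thus ?thesis unfolding Wform using nu_lower[OF p1, of n "int (W.Nf a) - 1"] by simp
    qed
    have "nu_p CHAR('l) (weil_sum d a0) = ereal (real n)"
      unfolding Wa0 assms(3) by (rule nu_exact[OF p1])
    thus "ereal (real n) \<in> (\<lambda>a::'l. nu_p CHAR('l) (weil_sum d a)) ` (UNIV - {0})"
      using a0(1) by force
  qed
  thus ?thesis using a0(1) Wa0 by blast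
qed


end
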